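(* For the difference module $(\mathscr O_t( *0),\phi_t)$ over itself, one has $\mathrm{Per}(\mathscr O_t( *0))=\mathscr A_{\mathrm{per}}$ as subsheaves of $\widetilde{\mathscr O}$ on $S^1$.
   Context: Let $\mathscr O_t( *0)=\mathbb C\{t\}[t^{-1}]$ with automorphism $\phi_t(f)(t)=f(t/(1+t))$; $s=t^{-1}$. On the circle $S^1$ of directions at $t=0$: $\widetilde{\mathscr O}$ is the sheaf of germs of holomorphic functions on sectors at $t=0$; $\mathscr A^{\leqslant0}$ (resp. $\mathscr A^{<0}$) the subsheaf of functions of moderate growth (resp. rapid decay) as $t\to0$ on closed subsectors; $\widetilde\phi_t$ the automorphism of $\widetilde{\mathscr O}$ given by composition with $t\mapsto t/(1+t)$ (i.e. $s\mapsto s+1$). $\mathscr A^{\leqslant0}_{\mathrm{per}}=\ker(\widetilde\phi_t-\mathrm{id})\cap\mathscr A^{\leqslant0}$, $u=\exp(2\pi\mathrm i s)$, $\mathscr A_{\mathrm{per}}=\sum_{n\in\mathbb Z}u^n\mathscr A^{\leqslant0}_{\mathrm{per}}$. The index sheaf $\mathscr I\subset\widetilde{\mathscr O}$ is the subsheaf of $\mathbb C$-vector spaces whose local sections are locally represented by $\sum_{\ell=1}^m c_\ell t^{-\ell/m}$ ($m\ge1$, $c_\ell\in\mathbb C$, some determination of $t^{1/m}$); for $\mathfrak a\in\mathscr I(U)$ put $\mathscr A^{\leqslant\mathfrak a}=\exp(\mathfrak a)\mathscr A^{\leqslant0}|_U$. For a difference module $(\mathscr M,\psi)$ over $(\mathscr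 O_t( *0),\phi_t)$ (finite-dimensional $\mathscr O_t( *0)$-vector space with additive bijection $\psi$, $\psi(fm)=\phi_t(f)\psi(m)$), let $\widetilde\psi=\widetilde\phi_t\otimes\psi$ on $\widetilde{\mathscr O}\otimes\mathscr M$ (tensor over the constant sheaf $\mathscr O_t( *0)$), let $\mathscr H^0\widetilde{\mathrm{DR}}(\mathscr M)=\ker(\widetilde\psi-\mathrm{id})\subset\widetilde{\mathscr O}\otimes\mathscr M$ and $\mathscr H^0\mathrm{DR}_{\leqslant\mathfrak a}(\mathscr M)=\ker(\widetilde\psi-\mathrm{id})\cap(\mathscr A^{\leqslant\mathfrak a}\otimes\mathscr M)$. Then $\mathrm{Per}(\mathscr M)$ is the unique subsheaf of $\mathscr H^0\widetilde{\mathrm{DR}}(\mathscr M)$ whose restriction to every open $U\subsetneq S^1$ equals $\sum_{\mathfrak a\in\mathscr I(U)}\mathscr H^0\mathrm{DR}_{\leqslant\mathfrak a}(\mathscr M)$. *)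

theory Defs
  imports "HOL-Analysis.Analysis"
begin

text \<open>Directions of the circle S^1 of directions at t = 0 are represented by real angles
  theta.  Open sectors of direction theta, half-opening delta and radius r:\<close>

definition sector :: "real \<Rightarrow> real \<Rightarrow> real \<Rightarrow> complex set" where
  "sector \<theta> \<delta> r = {t. t \<noteq> 0 \<and> norm t < r \<and>
       (\<exists>\<psi>. \<bar>\<psi> - \<theta>\<bar> < \<delta> \<and> t = complex_of_real (norm t) * cis \<psi>)}"

definition germ_eq :: "real \<Rightarrow> (complex \<Rightarrow> complex) \<Rightarrow> (complex \<Rightarrow> complex) \<Rightarrow> bool" where
  "germ_eq \<theta> f g \<longleftrightarrow> (\<exists>\<delta>>0. \<exists>r>0. \<forall>t\<in>sector \<theta> \<delta> r. f t = g t)"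

definition holo_germ :: "real \<Rightarrow> (complex \<Rightarrow> complex) \<Rightarrow> bool" where
  "holo_germ \<theta> f \<longleftrightarrow> (\<exists>\<delta>>0. \<exists>r>0. f holomorphic_on sector \<theta> \<delta> r)"

text \<open>Stalk of A^{<=0} at theta: holomorphic germs of moderate growth.\<close>
definition moderate_germ :: "real \<Rightarrow> (complex \<Rightarrow> complex) \<Rightarrow> bool" where
  "moderate_germ \<theta> f \<longleftrightarrow> (\<exists>\<delta>>0. \<exists>r>0. \<exists>C. \<exists>N::nat.
      f holomorphic_on sector \<theta> \<delta> r \<and> (\<forall>t\<in>sector \<theta> \<delta> r. norm (f t) \<le> C / norm t ^ N))"

definition phi_tilde :: "(complex \<Rightarrow> complex) \<Rightarrow> (complex \<Rightarrow> complex)" where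
  "phi_tilde f = (\<lambda>t. f (t / (1 + t)))"

definition periodic_germ :: "real \<Rightarrow> (complex \<Rightarrow> complex) \<Rightarrow> bool" where
  "periodic_germ \<theta> f \<longleftrightarrow> holo_germ \<theta> f \<and> germ_eq \<theta> (phi_tilde f) f"

text \<open>Stalk of the index sheaf at theta: germs of sum_{l=1}^m c_l t^{-l/m} for some
  determination rho of t^{1/m} on a sector.\<close>
definition index_germ :: "real \<Rightarrow> (complex \<Rightarrow> complex) \<Rightarrow> bool" where
  "index_germ \<theta> a \<longleftrightarrow> (\<exists>\<delta>>0. \<exists>r>0. \<exists>m::nat. \<exists>c::nat \<Rightarrow> complex. \<exists>\<rho>.
      m \<ge> 1 \<and> \<rho> holomorphic_on sector \<theta> \<delta> r \<and>
      (\<forall>t\<in>sector \<theta> \<delta> r. \<rho> t ^ m = t \<and> a t = (\<Sum>l=1..m. c l * inverse (\<rho> t ^ l))))"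

text \<open>Stalk at theta of A^{<=a} = exp(a) A^{<=0}.\<close>
definition A_le_germ :: "real \<Rightarrow> (complex \<Rightarrow> complex) \<Rightarrow> (complex \<Rightarrow> complex) \<Rightarrow> bool" where
  "A_le_germ \<theta> a g \<longleftrightarrow> (\<exists>h. moderate_germ \<theta> h \<and> germ_eq \<theta> g (\<lambda>t. exp (a t) * h t))"

text \<open>For M = O_t(*0) with psi = phi_t, tilde-O \<otimes> M = tilde-O and tilde-psi = tilde-phi_t.
  Stalk at theta of H^0 DR_{<=a}(M) = ker(tilde-psi - id) \<inter> A^{<=a}.\<close>
definition H0DR_le_germ :: "real \<Rightarrow> (complex \<Rightarrow> complex) \<Rightarrow> (complex \<Rightarrow> complex) \<Rightarrow> bool" where
  "H0DR_le_germ \<theta> a g \<longleftrightarrow> periodic_germ \<theta> g \<and> A_le_germ \<theta> a g"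

text \<open>Stalk at theta of Per(O_t(*0)) = sum over a in the index sheaf of H^0 DR_{<=a}.\<close>
definition Per_germ :: "real \<Rightarrow> (complex \<Rightarrow> complex) \<Rightarrow> bool" where
  "Per_germ \<theta> f \<longleftrightarrow> (\<exists>k::nat. \<exists>a g. (\<forall>i<k. index_germ \<theta> (a i) \<and> H0DR_le_germ \<theta> (a i) (g i))
      \<and> germ_eq \<theta> f (\<lambda>t. \<Sum>i<k. g i t))"

definition u_fun :: "complex \<Rightarrow> complex" where
  "u_fun t = exp (2 * of_real pi * \<i> / t)"

definition A_per_le0_germ :: "real \<Rightarrow> (complex \<Rightarrow> complex) \<Rightarrow> bool" where
  "A_per_le0_germ \<theta> h \<longleftrightarrow> periodic_germ \<theta> h \<and> moderate_germ \<theta> h"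

text \<open>Stalk of A_per = sum_n u^n A^{<=0}_per at theta.\<close>
definition A_per_germ :: "real \<Rightarrow> (complex \<Rightarrow> complex) \<Rightarrow> bool" where
  "A_per_germ \<theta> f \<longleftrightarrow> (\<exists>k::nat. \<exists>(n::nat \<Rightarrow> int) h. (\<forall>i<k. A_per_le0_germ \<theta> (h i))
      \<and> germ_eq \<theta> f (\<lambda>t. \<Sum>i<k. u_fun t powi n i * h i t))"

end

theory Submission
  imports Defs "HOL-Complex_Analysis.Complex_Analysis"
begin

lemma sector_mono: "\<delta>' \<le> \<delta> \<Longrightarrow> r' \<le> r \<Longrightarrow> sector \<theta> \<delta>' r' \<subseteq> sector \<theta> \<delta> r"
  unfolding sector_def by force

lemma sector_nz: "t \<in> sector \<theta> \<delta> r \<Longrightarrow> t \<noteq> 0"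
  unfolding sector_def by auto

lemma sector_norm: "t \<in> sector \<theta> \<delta> r \<Longrightarrow> norm t < r"
  unfolding sector_def by auto

lemma germ_eqI: "\<delta> > 0 \<Longrightarrow> r > 0 \<Longrightarrow> (\<And>t. t \<in> sector \<theta> \<delta> r \<Longrightarrow> f t = g t) \<Longrightarrow> germ_eq \<theta> f g"
  unfolding germ_eq_def by blast

lemma holo_germI: "\<delta> > 0 \<Longrightarrow> r > 0 \<Longrightarrow> f holomorphic_on sector \<theta> \<delta> r \<Longrightarrow> holo_germ \<theta> f"
  unfolding holo_germ_def by blast

lemma u_periodic:
  assumes "t \<noteq> 0" shows "u_fun (t / (1 + t)) = u_fun t"
proof -
  have "2 * of_real pi * \<i> / (t / (1 + t)) = 2 * of_real pi * \<i> / t + 2 * of_real pi * \<i>"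
    using assms by (simp add: field_simps)
  then show ?thesis unfolding u_fun_def by (simp add: exp_add)
qed

lemma u_powi: "u_fun t powi n = exp (of_int n * (2 * of_real pi * \<i> / t))"
  unfolding u_fun_def by (simp add: exp_power_int)

lemma u_powi_holo: "0 \<notin> S \<Longrightarrow> (\<lambda>t. u_fun t powi n) holomorphic_on S"
  unfolding u_powi by (intro holomorphic_intros) auto

lemma A_per_imp_Per: "A_per_germ \<theta> f \<Longrightarrow> Per_germ \<theta> f"
proof -
  assume "A_per_germ \<theta> f"
  then obtain k :: nat and n :: "nat \<Rightarrow> int" and h where hA: "\<forall>i<k. A_per_le0_germ \<theta> (h i)"
    and fe: "germ_eq \<theta> f (\<lambda>t. \<Sum>i<k. u_fun t powi n i * h i t)"
    unfolding A_per_germ_def by blast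
  define a where "a = (\<lambda>i t. of_int (n i) * (2 * of_real pi * \<i>) * inverse (t::complex))"
  define g where "g = (\<lambda>i t. u_fun t powi n i * h i t)"
  have "index_germ \<theta> (a i)" for i
    unfolding index_germ_def
  proof (rule exI[of _ "1::real"], rule conjI, simp, rule exI[of _ "1::real"], rule conjI, simp,
     rule exI[of _ "1::nat"], rule exI[of _ "\<lambda>_::nat. of_int (n i) * (2 * of_real pi * \<i>)"],
     rule exI[of _ "\<lambda>t::complex. t"], intro conjI ballI)
  qed (auto simp: a_def)
  moreover have "H0DR_le_germ \<theta> (a i) (g i)" if "i < k" for i
  proof -
    from hA that have hp: "holo_germ \<theta> (h i)" "germ_eq \<theta> (phi_tilde (h i)) (h i)"
      and hm: "moderate_germ \<theta> (h i)"
      unfolding A_per_le0_germ_def periodic_germ_def by auto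
    have "holo_germ \<theta> (g i)"
    proof -
      from hp(1) obtain \<delta> r where "\<delta> > 0" "r > 0" "h i holomorphic_on sector \<theta> \<delta> r"
        unfolding holo_germ_def by auto
      moreover have "(\<lambda>t. u_fun t powi n i) holomorphic_on sector \<theta> \<delta> r"
        by (rule u_powi_holo) (auto dest: sector_nz)
      ultimately show ?thesis unfolding g_def
        by (intro holo_germI[of \<delta> r]) (auto intro: holomorphic_on_mult)
    qed
    moreover have "germ_eq \<theta> (phi_tilde (g i)) (g i)"
    proof -
      from hp(2) obtain \<delta> r where "\<delta> > 0" "r > 0" "\<forall>t\<in>sector \<theta> \<delta> r. phi_tilde (h i) t = h i t"
        unfolding germ_eq_def by auto
      then show ?thesis
        by (intro germ_eqI[of \<delta> r]) (auto simp: g_def phi_tilde_def u_periodic dest: sector_nz)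
    qed
    moreover have "A_le_germ \<theta> (a i) (g i)"
      unfolding A_le_germ_def
    proof (intro exI conjI)
      show "moderate_germ \<theta> (h i)" by (rule hm)
      show "germ_eq \<theta> (g i) (\<lambda>t. exp (a i t) * h i t)"
        by (intro germ_eqI[of 1 1]) (auto simp: g_def a_def u_powi field_simps dest: sector_nz)
    qed
    ultimately show ?thesis unfolding H0DR_le_germ_def periodic_germ_def by auto
  qed
  ultimately show ?thesis unfolding Per_germ_def using fe
    by (intro exI[of _ k] exI[of _ a] exI[of _ g]) (auto simp: g_def)
qed

definition good :: "real \<Rightarrow> (complex \<Rightarrow> complex) \<Rightarrow> real \<Rightarrow> real \<Rightarrow> bool" where
  "good \<theta> g \<delta> r \<longleftrightarrow> \<delta> > 0 \<and> r > 0 \<and> r \<le> 1 \<and> g holomorphic_on sector \<theta> \<delta> r \<and>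
     (\<forall>t\<in>sector \<theta> \<delta> r. g (t / (1 + t)) = g t) \<and>
     (\<exists>C K. C \<ge> 0 \<and> K \<ge> 0 \<and> (\<forall>t\<in>sector \<theta> \<delta> r. norm (g t) \<le> C * exp (K / norm t)))"

lemma good_mono:
  assumes "good \<theta> g \<delta> r" "0 < \<delta>'" "\<delta>' \<le> \<delta>" "0 < r'" "r' \<le> r"
  shows "good \<theta> g \<delta>' r'"
proof -
  have S: "sector \<theta> \<delta>' r' \<subseteq> sector \<theta> \<delta> r" using assms by (intro sector_mono)
  from assms(1) obtain C K where "C \<ge> 0" "K \<ge> 0" "\<forall>t\<in>sector \<theta> \<delta> r. norm (g t) \<le> C * exp (K / norm t)"
    unfolding good_def by blast
  with assms S show ?thesis unfolding good_def
    by (auto intro: holomorphic_on_subset)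
qed

lemma good_add:
  assumes "good \<theta> g1 \<delta>1 r1" "good \<theta> g2 \<delta>2 r2"
  shows "good \<theta> (\<lambda>t. g1 t + g2 t) (min \<delta>1 \<delta>2) (min r1 r2)"
proof -
  let ?S = "sector \<theta> (min \<delta>1 \<delta>2) (min r1 r2)"
  have p: "\<delta>1 > 0" "\<delta>2 > 0" "r1 > 0" "r2 > 0" using assms unfolding good_def by auto
  have g1: "good \<theta> g1 (min \<delta>1 \<delta>2) (min r1 r2)" 
    by (rule good_mono[OF assms(1)]) (use p in auto)
  have g2: "good \<theta> g2 (min \<delta>1 \<delta>2) (min r1 r2)"
    by (rule good_mono[OF assms(2)]) (use p in auto)
  from g1 obtain C1 K1 where c1: "C1 \<ge> 0" "K1 \<ge> 0" "\<forall>t\<in>?S. norm (g1 t) \<le> C1 * exp (K1 / norm t)"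
    unfolding good_def by blast
  from g2 obtain C2 K2 where c2: "C2 \<ge> 0" "K2 \<ge> 0" "\<forall>t\<in>?S. norm (g2 t) \<le> C2 * exp (K2 / norm t)"
    unfolding good_def by blast
  have "norm (g1 t + g2 t) \<le> (C1 + C2) * exp ((K1 + K2) / norm t)" if "t \<in> ?S" for t
  proof -
    have "norm (g1 t + g2 t) \<le> C1 * exp (K1 / norm t) + C2 * exp (K2 / norm t)"
      using c1 c2 that by (meson add_mono norm_triangle_ineq order_trans)
    also have "\<dots> \<le> C1 * exp ((K1 + K2) / norm t) + C2 * exp ((K1 + K2) / norm t)"
      using c1 c2 by (intro add_mono mult_left_mono) (auto intro!: divide_right_mono)
    finally show ?thesis by (simp add: algebra_simps)
  qed
  moreover have "(\<lambda>t. g1 t + g2 t) holomorphic_on ?S"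
    using g1 g2 unfolding good_def by (intro holomorphic_on_add) auto
  moreover have "\<forall>t\<in>?S. g1 (t / (1 + t)) + g2 (t / (1 + t)) = g1 t + g2 t"
    using g1 g2 unfolding good_def by auto
  moreover have "0 < min \<delta>1 \<delta>2" "0 < min r1 r2" "min r1 r2 \<le> 1"
    using g1 unfolding good_def by auto
  ultimately show ?thesis unfolding good_def using c1 c2
    by (intro conjI exI[of _ "C1 + C2"] exI[of _ "K1 + K2"]) auto
qed

lemma good_sum:
  fixes k :: nat
  assumes "\<forall>i<k. \<exists>\<delta> r. good \<theta> (g i) \<delta> r"
  shows "\<exists>\<delta> r. good \<theta> (\<lambda>t. \<Sum>i<k. g i t) \<delta> r"
  using assms
proof (induction k)
  case 0
  have "good \<theta> (\<lambda>t. 0) 1 1" unfolding good_def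
    by (auto intro!: exI[of _ 0])
  then show ?case by auto
next
  case (Suc k)
  then obtain \<delta>1 r1 \<delta>2 r2 where "good \<theta> (\<lambda>t. \<Sum>i<k. g i t) \<delta>1 r1" "good \<theta> (g k) \<delta>2 r2"
    by (meson lessI less_SucI)
  from good_add[OF this] show ?case by auto
qed

lemma inv_pow_le:
  fixes \<rho> t :: complex
  assumes "norm t < 1" "t \<noteq> 0" "\<rho> ^ m = t" "1 \<le> l" "l \<le> m"
  shows "norm (inverse (\<rho> ^ l)) \<le> 1 / norm t"
proof -
  have nm: "norm \<rho> ^ m = norm t" using assms(3) by (metis norm_power)
  have "\<rho> \<noteq> 0" using assms by (metis power_0_left not_one_le_zero le_trans zero_power bot_nat_0.not_eq_extremum)
  have "norm \<rho> \<le> 1"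
  proof (rule ccontr)
    assume "\<not> norm \<rho> \<le> 1"
    then have "1 \<le> norm \<rho> ^ m" by (simp add: one_le_power)
    with nm assms(1) show False by simp
  qed
  then have "norm \<rho> ^ m \<le> norm \<rho> ^ l" using assms(5) by (intro power_decreasing) auto
  then have "norm t \<le> norm (\<rho> ^ l)" using nm by (simp add: norm_power)
  have eq: "norm (inverse (\<rho> ^ l)) = 1 / norm (\<rho> ^ l)" by (simp add: norm_inverse divide_inverse)
  show ?thesis unfolding eq
  proof (rule divide_left_mono)
    have "0 < norm t" using assms(2) by simp
    then show "0 < norm (\<rho> ^ l) * norm t" using \<open>norm t \<le> norm (\<rho> ^ l)\<close> by (meson less_le_trans mult_pos_pos)
  qed (use \<open>norm t \<le> norm (\<rho> ^ l)\<close> in auto)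
qed

lemma inv_powN_le: "x > 0 \<Longrightarrow> 1 / x ^ N \<le> exp (real N / (x::real))"
proof -
  assume "x > 0"
  have "1 / x \<le> exp (1 / x)" using exp_ge_add_one_self[of "1/x"] by linarith
  then have "(1 / x) ^ N \<le> exp (1 / x) ^ N" using \<open>x > 0\<close> by (intro power_mono) auto
  also have "\<dots> = exp (real N / x)" by (simp add: exp_of_nat_mult[symmetric])
  finally show ?thesis by (simp add: power_one_over)
qed

lemma germ_eq_trans: "germ_eq \<theta> f g \<Longrightarrow> germ_eq \<theta> g h \<Longrightarrow> germ_eq \<theta> f h"
proof -
  assume "germ_eq \<theta> f g" "germ_eq \<theta> g h"
  then obtain \<delta>1 r1 \<delta>2 r2 where "\<delta>1 > 0" "r1 > 0" "\<forall>t\<in>sector \<theta> \<delta>1 r1. f t = g t"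
     "\<delta>2 > 0" "r2 > 0" "\<forall>t\<in>sector \<theta> \<delta>2 r2. g t = h t" unfolding germ_eq_def by blast
  moreover have "sector \<theta> (min \<delta>1 \<delta>2) (min r1 r2) \<subseteq> sector \<theta> \<delta>1 r1"
     "sector \<theta> (min \<delta>1 \<delta>2) (min r1 r2) \<subseteq> sector \<theta> \<delta>2 r2"
    by (rule sector_mono; simp)+
  ultimately show ?thesis
    by (intro germ_eqI[of "min \<delta>1 \<delta>2" "min r1 r2"]) (auto, metis subsetD)
qed

lemma A_per_germ_cong: "germ_eq \<theta> f g \<Longrightarrow> A_per_germ \<theta> g \<Longrightarrow> A_per_germ \<theta> f"
  unfolding A_per_germ_def by (meson germ_eq_trans)

lemma Per_single:
  assumes ia: "index_germ \<theta> a" and hg: "H0DR_le_germ \<theta> a g"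
  shows "\<exists>\<delta> r. good \<theta> g \<delta> r"
proof -
  from hg obtain \<delta>1 r1 where d1: "\<delta>1 > 0" "r1 > 0" "g holomorphic_on sector \<theta> \<delta>1 r1"
    unfolding H0DR_le_germ_def periodic_germ_def holo_germ_def by blast
  from hg obtain \<delta>2 r2 where d2: "\<delta>2 > 0" "r2 > 0" "\<forall>t\<in>sector \<theta> \<delta>2 r2. g (t / (1 + t)) = g t"
    unfolding H0DR_le_germ_def periodic_germ_def germ_eq_def phi_tilde_def by blast
  from hg obtain h where hm: "moderate_germ \<theta> h" and ge: "germ_eq \<theta> g (\<lambda>t. exp (a t) * h t)"
    unfolding H0DR_le_germ_def A_le_germ_def by blast
  from hm obtain \<delta>3 r3 C N where d3: "\<delta>3 > 0" "r3 > 0"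
     "\<forall>t\<in>sector \<theta> \<delta>3 r3. norm (h t) \<le> C / norm t ^ N"
    unfolding moderate_germ_def by blast
  from ge obtain \<delta>4 r4 where d4: "\<delta>4 > 0" "r4 > 0" "\<forall>t\<in>sector \<theta> \<delta>4 r4. g t = exp (a t) * h t"
    unfolding germ_eq_def by blast
  from ia obtain \<delta>5 r5 m c \<rho> where d5: "\<delta>5 > 0" "r5 > 0" "m \<ge> 1"
    "\<forall>t\<in>sector \<theta> \<delta>5 r5. \<rho> t ^ m = t \<and> a t = (\<Sum>l=1..m. c l * inverse (\<rho> t ^ l))"
    unfolding index_germ_def by blast
  define \<delta> where "\<delta> = min \<delta>1 (min \<delta>2 (min \<delta>3 (min \<delta>4 \<delta>5)))"
  define r where "r = min (1/2) (min r1 (min r2 (min r3 (min r4 r5))))"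
  let ?S = "sector \<theta> \<delta> r"
  have dp: "\<delta> > 0" "r > 0" "r \<le> 1" using d1 d2 d3 d4 d5 by (auto simp: \<delta>_def r_def)
  have S1: "?S \<subseteq> sector \<theta> \<delta>1 r1" and S2: "?S \<subseteq> sector \<theta> \<delta>2 r2" and S3: "?S \<subseteq> sector \<theta> \<delta>3 r3"
   and S4: "?S \<subseteq> sector \<theta> \<delta>4 r4" and S5: "?S \<subseteq> sector \<theta> \<delta>5 r5"
    by (rule sector_mono; simp add: \<delta>_def r_def)+
  define Kc where "Kc = (\<Sum>l=1..m. norm (c l))"
  have Kc: "Kc \<ge> 0" unfolding Kc_def by (intro sum_nonneg) auto
  have bound: "norm (g t) \<le> \<bar>C\<bar> * exp ((Kc + real N) / norm t)" if t: "t \<in> ?S" for t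
  proof -
    have tn: "t \<noteq> 0" "norm t < 1/2" using t sector_nz sector_norm[OF t] by (auto simp: r_def)
    have tp: "norm t > 0" using tn by simp
    have ra: "\<rho> t ^ m = t" "a t = (\<Sum>l=1..m. c l * inverse (\<rho> t ^ l))" using d5 S5 t by auto
    have "norm (a t) \<le> (\<Sum>l=1..m. norm (c l) * (1 / norm t))"
      unfolding ra(2)
    proof (rule order_trans[OF norm_sum], rule sum_mono)
      fix l assume "l \<in> {1..m}"
      then have "norm (inverse (\<rho> t ^ l)) \<le> 1 / norm t"
        using tn ra(1) by (intro inv_pow_le) auto
      then show "norm (c l * inverse (\<rho> t ^ l)) \<le> norm (c l) * (1 / norm t)"
        unfolding norm_mult by (rule mult_left_mono) auto
    qed
    also have "\<dots> = Kc / norm t" by (simp add: Kc_def sum_divide_distrib)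
    finally have na: "norm (a t) \<le> Kc / norm t" .
    have ea: "norm (exp (a t)) \<le> exp (Kc / norm t)"
      using norm_exp[of "a t"] na by (meson exp_le_cancel_iff order_trans)
    have "norm (h t) \<le> C / norm t ^ N" using d3 S3 t by auto
    also have "\<dots> \<le> \<bar>C\<bar> * (1 / norm t ^ N)" using tp by (simp add: divide_right_mono)
    also have "\<dots> \<le> \<bar>C\<bar> * exp (real N / norm t)"
      using inv_powN_le[OF tp, of N] by (intro mult_left_mono) auto
    finally have nh: "norm (h t) \<le> \<bar>C\<bar> * exp (real N / norm t)" .
    have "norm (g t) = norm (exp (a t)) * norm (h t)" using d4 S4 t by (auto simp: norm_mult)
    also have "\<dots> \<le> exp (Kc / norm t) * (\<bar>C\<bar> * exp (real N / norm t))"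
      using ea nh by (intro mult_mono) auto
    also have "\<dots> = \<bar>C\<bar> * exp ((Kc + real N) / norm t)"
      by (simp add: add_divide_distrib exp_add)
    finally show ?thesis .
  qed
  have "good \<theta> g \<delta> r" unfolding good_def
  proof (intro conjI)
    show "g holomorphic_on ?S" using d1 S1 holomorphic_on_subset by blast
    show "\<forall>t\<in>?S. g (t / (1 + t)) = g t" using d2 S2 by blast
    show "\<exists>C K. C \<ge> 0 \<and> K \<ge> 0 \<and> (\<forall>t\<in>?S. norm (g t) \<le> C * exp (K / norm t))"
      using bound Kc by (intro exI[of _ "\<bar>C\<bar>"] exI[of _ "Kc + real N"]) auto
  qed (use dp in auto)
  then show ?thesis by blast
qed

lemma sin_diff_le: "\<bar>sin a - sin b\<bar> \<le> \<bar>a - b\<bar>" for a b :: real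
proof -
  have "\<bar>sin a - sin b\<bar> = 2 * \<bar>sin ((a - b) / 2)\<bar> * \<bar>cos ((a + b) / 2)\<bar>"
    by (simp add: sin_diff_sin abs_mult)
  also have "\<dots> \<le> 2 * \<bar>sin ((a - b) / 2)\<bar>"
    by (simp add: mult_left_le)
  also have "\<dots> \<le> 2 * \<bar>(a - b) / 2\<bar>"
    using abs_sin_x_le_abs_x[of "(a - b) / 2"] by linarith
  finally show ?thesis by simp
qed

lemma sector_polar: "t \<in> sector \<theta> \<delta> r \<Longrightarrow> \<exists>\<psi>. \<bar>\<psi> - \<theta>\<bar> < \<delta> \<and> t = complex_of_real (norm t) * cis \<psi>"
  unfolding sector_def by blast

lemma inv_polar: "inverse (of_real \<rho> * cis \<psi>) = of_real (1 / \<rho>) * cis (- \<psi>)"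
  by (simp add: inverse_mult_distrib divide_inverse)

lemma re_2pii_div:
  shows "Re (of_int k * (2 * of_real pi * \<i> / (of_real \<rho> * cis \<psi>))) = real_of_int k * 2 * pi * sin \<psi> / \<rho>"
proof -
  have "Re (of_int k * (2 * of_real pi * \<i> * (of_real (1 / \<rho>) * cis (- \<psi>)))) = real_of_int k * 2 * pi * sin \<psi> / \<rho>"
    by (simp add: cis.ctr)
  then show ?thesis unfolding divide_inverse inv_polar .
qed

lemma norm_u_powi:
  assumes "\<rho> > 0"
  shows "norm (u_fun (of_real \<rho> * cis \<psi>) powi k) = exp (real_of_int k * 2 * pi * sin \<psi> / \<rho>)"
  unfolding u_powi norm_exp_eq_Re using re_2pii_div by simp

lemma moderate_germI: "\<delta> > 0 \<Longrightarrow> r > 0 \<Longrightarrow> f holomorphic_on sector \<theta> \<delta> r \<Longrightarrow>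
   (\<And>t. t \<in> sector \<theta> \<delta> r \<Longrightarrow> norm (f t) \<le> C / norm t ^ N) \<Longrightarrow> moderate_germ \<theta> f"
  unfolding moderate_germ_def by blast

lemma key_vert:
  assumes gd: "good \<theta> g \<delta> r" and sn: "sin \<theta> \<noteq> 0"
  shows "A_per_germ \<theta> g"
proof -
  from gd obtain C K where dp: "\<delta> > 0" "r > 0" and hol: "g holomorphic_on sector \<theta> \<delta> r"
    and per: "\<forall>t\<in>sector \<theta> \<delta> r. g (t / (1 + t)) = g t"
    and CK: "C \<ge> 0" "K \<ge> 0" "\<forall>t\<in>sector \<theta> \<delta> r. norm (g t) \<le> C * exp (K / norm t)"
    unfolding good_def by blast
  define c where "c = \<bar>sin \<theta>\<bar> / 2"
  have cp: "c > 0" using sn by (simp add: c_def)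
  define \<delta>' where "\<delta>' = min \<delta> c"
  have dp': "\<delta>' > 0" using dp cp by (simp add: \<delta>'_def)
  let ?S = "sector \<theta> \<delta>' r"
  have SS: "?S \<subseteq> sector \<theta> \<delta> r" by (rule sector_mono) (auto simp: \<delta>'_def)
  define \<sigma> :: int where "\<sigma> = (if sin \<theta> > 0 then 1 else -1)"
  define M :: nat where "M = nat \<lceil>K / (2 * pi * c)\<rceil>"
  define n :: int where "n = \<sigma> * int M"
  define h where "h = (\<lambda>t. u_fun t powi (- n) * g t)"
  have KM: "K \<le> real M * (2 * pi * c)"
  proof -
    have "K / (2 * pi * c) \<le> real M" unfolding M_def by linarith
    then show ?thesis using cp pi_gt_zero by (simp add: divide_simps mult.commute)
  qed
  have hb: "norm (h t) \<le> C" if t: "t \<in> ?S" for t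
  proof -
    obtain \<psi> where \<psi>: "\<bar>\<psi> - \<theta>\<bar> < \<delta>'" "t = of_real (norm t) * cis \<psi>" using sector_polar[OF t] by blast
    have tp: "norm t > 0" using t sector_nz by auto
    have "\<bar>\<psi> - \<theta>\<bar> < c" using \<psi>(1) unfolding \<delta>'_def by linarith
    then have sd: "\<bar>sin \<psi> - sin \<theta>\<bar> < c" using sin_diff_le[of \<psi> \<theta>] by linarith
    have ss: "real_of_int \<sigma> * sin \<psi> \<ge> c"
    proof (cases "sin \<theta> > 0")
      case True
      then show ?thesis using sd unfolding \<sigma>_def c_def abs_less_iff by (auto simp: abs_if)
    next
      case False
      then show ?thesis using sd unfolding \<sigma>_def c_def abs_less_iff by (auto simp: abs_if)
    qed
    have "norm (u_fun t powi (- n)) = exp (real_of_int (- n) * 2 * pi * sin \<psi> / norm t)"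
      using norm_u_powi[OF tp, of \<psi> "-n"] \<psi>(2) by simp
    also have "\<dots> \<le> exp (- K / norm t)"
    proof -
      have "real_of_int (- n) * 2 * pi * sin \<psi> = - (real M * 2 * pi * (real_of_int \<sigma> * sin \<psi>))"
        by (simp add: n_def)
      also have "\<dots> \<le> - (real M * 2 * pi * c)"
        using ss by (intro le_imp_neg_le mult_left_mono) auto
      also have "\<dots> \<le> - K" using KM by (simp add: mult.assoc)
      finally show ?thesis using tp by (simp add: divide_right_mono)
    qed
    finally have nu: "norm (u_fun t powi (- n)) \<le> exp (- K / norm t)" .
    have "norm (h t) \<le> exp (- K / norm t) * (C * exp (K / norm t))"
      unfolding h_def norm_mult using nu CK SS t by (intro mult_mono) auto
    also have "\<dots> = C" by (simp add: exp_minus field_simps)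
    finally show ?thesis .
  qed
  have hh: "h holomorphic_on ?S" unfolding h_def
    using hol SS by (intro holomorphic_on_mult u_powi_holo holomorphic_on_subset[OF hol SS]) (auto dest: sector_nz)
  have hper: "h (t / (1 + t)) = h t" if t: "t \<in> ?S" for t
    using per SS t sector_nz[OF t] by (auto simp: h_def u_periodic)
  have "A_per_le0_germ \<theta> h"
    unfolding A_per_le0_germ_def periodic_germ_def
  proof (intro conjI)
    show "holo_germ \<theta> h" by (rule holo_germI[OF dp' \<open>r > 0\<close> hh])
    show "germ_eq \<theta> (phi_tilde h) h"
      by (rule germ_eqI[OF dp' \<open>r > 0\<close>]) (simp add: phi_tilde_def hper)
    show "moderate_germ \<theta> h"
      by (rule moderate_germI[OF dp' \<open>r > 0\<close> hh, of C 0]) (simp add: hb)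
  qed
  moreover have "germ_eq \<theta> g (\<lambda>t. \<Sum>i<(1::nat). u_fun t powi (\<lambda>_. n) i * (\<lambda>_. h) i t)"
  proof (rule germ_eqI[OF dp' \<open>r > 0\<close>])
    fix t assume "t \<in> ?S"
    have un: "u_fun t \<noteq> 0" by (simp add: u_fun_def)
    have "u_fun t powi n * u_fun t powi (- n) = 1"
      using un by (simp add: power_int_add[symmetric])
    then show "g t = (\<Sum>i<(1::nat). u_fun t powi (\<lambda>_. n) i * (\<lambda>_. h) i t)"
      by (simp add: h_def mult.assoc[symmetric] card_lessThan)
  qed
  ultimately show ?thesis unfolding A_per_germ_def
    by (intro exI[of _ "1::nat"] exI[of _ "\<lambda>_::nat. n"] exI[of _ "\<lambda>_::nat. h"]) auto
qed

lemma periodic_extension: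
  fixes F :: "complex \<Rightarrow> complex" and R c C K :: real
  assumes W_def: "W = {w. R < Re w \<and> \<bar>Im w\<bar> < c * Re w}"
    and c: "c > 0" and R: "R \<ge> 0" and C: "C \<ge> 0" and K: "K \<ge> 0"
    and hol: "F holomorphic_on W"
    and per: "\<And>w. w \<in> W \<Longrightarrow> F (w + 1) = F w"
    and bd: "\<And>w. w \<in> W \<Longrightarrow> norm (F w) \<le> C * exp (K * norm w)"
  shows "\<exists>Fh. Fh holomorphic_on UNIV \<and> (\<forall>z. \<forall>k::int. Fh (z + of_int k) = Fh z) \<and>
     (\<forall>w\<in>W. Fh w = F w) \<and> (\<exists>C1 K1. C1 \<ge> 0 \<and> K1 \<ge> 0 \<and> (\<forall>z. norm (Fh z) \<le> C1 * exp (K1 * \<bar>Im z\<bar>)))"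
proof -
  have openW: "open W" unfolding W_def
    by (intro open_Collect_conj open_Collect_less continuous_intros)
  have W1: "w + 1 \<in> W" if "w \<in> W" for w
  proof -
    have "c * Re w < c * (Re w + 1)" using c by simp
    then show ?thesis using that unfolding W_def by auto
  qed
  have Wk: "w + of_nat k \<in> W \<and> F (w + of_nat k) = F w" if "w \<in> W" for w k
  proof (induction k)
    case 0 then show ?case using that by simp
  next
    case (Suc k)
    then have "w + of_nat (Suc k) = (w + of_nat k) + 1" by simp
    with Suc W1 per show ?case by metis
  qed
  define T where "T z = R + \<bar>Im z\<bar> / c + \<bar>Re z\<bar>" for z
  have inW: "z + of_nat n \<in> W" if "real n > T z" for z n
  proof -
    have i0: "\<bar>Im z\<bar> / c \<ge> 0" using c by simp
    have a: "Re z + real n > R + \<bar>Im z\<bar> / c" using that unfolding T_def by linarith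
    then have "Re z + real n > \<bar>Im z\<bar> / c" using R by linarith
    then have "c * (Re z + real n) > c * (\<bar>Im z\<bar> / c)" using c by (intro mult_strict_left_mono) auto
    then have "c * (Re z + real n) > \<bar>Im z\<bar>" using c by simp
    then show ?thesis unfolding W_def using a i0 by auto
  qed
  have Fmn: "F (z + of_nat n) = F (z + of_nat m)" if "real m > T z" "m \<le> n" for z m n
  proof -
    have "z + of_nat n = (z + of_nat m) + of_nat (n - m)" using that(2) by (simp add: of_nat_diff)
    then show ?thesis using Wk[OF inW[OF that(1)], of "n - m"] by (simp add: add.assoc)
  qed
  have Fnn: "F (z + of_nat n) = F (z + of_nat m)" if "real m > T z" "real n > T z" for z m n
    using Fmn that by (metis nat_le_linear)
  define Fh where "Fh z = F (z + of_nat (nat \<lceil>T z\<rceil> + 1))" for z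
  have Fh_eq: "Fh z = F (z + of_nat n)" if "real n > T z" for z n
    unfolding Fh_def by (rule Fnn[OF that]) linarith
  have Fh_hol_ball: "Fh holomorphic_on ball z0 1" for z0
  proof -
    define N where "N = nat \<lceil>T z0 + 1 / c + 1\<rceil> + 1"
    have TN: "T z < real N" if "z \<in> ball z0 1" for z
    proof -
      have d: "norm (z - z0) < 1" using that by (simp add: dist_norm norm_minus_commute)
      have "\<bar>Im z\<bar> \<le> \<bar>Im z0\<bar> + 1" using abs_Im_le_cmod[of "z - z0"] d by auto
      then have "\<bar>Im z\<bar> / c \<le> (\<bar>Im z0\<bar> + 1) / c" using c by (simp add: divide_right_mono)
      moreover have "\<bar>Re z\<bar> < \<bar>Re z0\<bar> + 1" using abs_Re_le_cmod[of "z - z0"] d by auto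
      moreover have "(\<bar>Im z0\<bar> + 1) / c = \<bar>Im z0\<bar> / c + 1 / c" by (simp add: add_divide_distrib)
      ultimately have "T z < T z0 + 1 / c + 1" unfolding T_def by linarith
      then show ?thesis unfolding N_def by linarith
    qed
    have "(\<lambda>z. F (z + of_nat N)) holomorphic_on ball z0 1"
    proof (rule holomorphic_on_compose_gen[where g = F and t = W, unfolded o_def])
      show "(\<lambda>z. z + of_nat N) holomorphic_on ball z0 1" by (intro holomorphic_intros)
      show "F holomorphic_on W" by (rule hol)
      show "(\<lambda>z. z + of_nat N) ` ball z0 1 \<subseteq> W" using inW TN by auto
    qed
    then show ?thesis by (rule holomorphic_transform) (metis Fh_eq TN)
  qed
  have Fh_hol: "Fh holomorphic_on UNIV"
  proof -
    have "Fh field_differentiable at z0" for z0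
      by (rule holomorphic_on_imp_differentiable_at[OF Fh_hol_ball[of z0]]) auto
    then show ?thesis by (simp add: holomorphic_on_def field_differentiable_at_within)
  qed
  have Fh1: "Fh (z + 1) = Fh z" for z
  proof -
    define n where "n = nat \<lceil>T z\<rceil> + 2"
    have "T (z + 1) \<le> T z + 1" unfolding T_def by auto
    then have "real n > T (z + 1)" "real (n + 1) > T z" unfolding n_def by linarith+
    then have "Fh (z + 1) = F (z + 1 + of_nat n)" "Fh z = F (z + of_nat (n + 1))" using Fh_eq by blast+
    then show ?thesis by (simp add: add_ac)
  qed
  have Fh_nat: "Fh (z + of_nat k) = Fh z" for z k
  proof (induction k)
    case (Suc k)
    have "Fh (z + of_nat (Suc k)) = Fh ((z + of_nat k) + 1)" by (simp add: add_ac)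
    then show ?case using Fh1 Suc by simp
  qed simp
  have Fh_int: "Fh (z + of_int k) = Fh z" for z k
  proof (cases "k \<ge> 0")
    case True
    then have "of_int k = (of_nat (nat k) :: complex)" by simp
    then show ?thesis using Fh_nat by simp
  next
    case False
    have "z = (z + of_int k) + of_nat (nat (- k))" using False by simp
    then show ?thesis using Fh_nat by metis
  qed
  have Fh_W: "Fh w = F w" if "w \<in> W" for w
    unfolding Fh_def using Wk[OF that] by blast
  have Fh_bd: "norm (Fh z) \<le> (C * exp (K * (R + 1))) * exp ((K * (1 / c + 1)) * \<bar>Im z\<bar>)" for z
  proof -
    define k where "k = \<lfloor>R + \<bar>Im z\<bar> / c - Re z\<rfloor> + 1"
    define z' where "z' = z + of_int k"
    have k1: "real_of_int k > R + \<bar>Im z\<bar> / c - Re z" "real_of_int k \<le> R + \<bar>Im z\<bar> / c - Re z + 1"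
      unfolding k_def by linarith+
    have rz: "Re z' = Re z + real_of_int k" "Im z' = Im z" unfolding z'_def by auto
    have i0: "\<bar>Im z\<bar> / c \<ge> 0" using c by simp
    have a: "Re z' > R + \<bar>Im z\<bar> / c" using k1 rz by linarith
    then have "Re z' > \<bar>Im z\<bar> / c" using R by linarith
    then have "c * Re z' > c * (\<bar>Im z\<bar> / c)" using c by (intro mult_strict_left_mono) auto
    then have "c * Re z' > \<bar>Im z'\<bar>" using c rz by simp
    then have z'W: "z' \<in> W" unfolding W_def using a i0 by auto
    have "norm z' \<le> \<bar>Re z'\<bar> + \<bar>Im z'\<bar>" by (rule cmod_le)
    also have "\<dots> \<le> (R + \<bar>Im z\<bar> / c + 1) + \<bar>Im z\<bar>" using k1 rz R i0 by auto
    also have "\<dots> = (R + 1) + (1 / c + 1) * \<bar>Im z\<bar>" by (simp add: algebra_simps)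
    finally have nz: "norm z' \<le> (R + 1) + (1 / c + 1) * \<bar>Im z\<bar>" .
    have "norm (Fh z) = norm (F z')" using Fh_int[of z k] Fh_W[OF z'W] by (simp add: z'_def)
    also have "\<dots> \<le> C * exp (K * norm z')" by (rule bd[OF z'W])
    also have "\<dots> \<le> C * exp (K * ((R + 1) + (1 / c + 1) * \<bar>Im z\<bar>))"
      using nz K C by (intro mult_left_mono) (auto intro: mult_left_mono)
    also have "\<dots> = (C * exp (K * (R + 1))) * exp ((K * (1 / c + 1)) * \<bar>Im z\<bar>)"
      by (simp add: algebra_simps exp_add)
    finally show ?thesis .
  qed
  show ?thesis
    using Fh_hol Fh_int Fh_W Fh_bd C K c R
    by (intro exI[of _ Fh] conjI exI[of _ "C * exp (K * (R + 1))"] exI[of _ "K * (1 / c + 1)"]) auto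
qed

lemma periodic_laurent:
  fixes Fh :: "complex \<Rightarrow> complex"
  assumes hol: "Fh holomorphic_on UNIV"
    and per: "\<And>z k. Fh (z + of_int k) = Fh z"
    and C1: "C1 \<ge> 0" and K1: "K1 \<ge> 0"
    and bd: "\<And>z. norm (Fh z) \<le> C1 * exp (K1 * \<bar>Im z\<bar>)"
  shows "\<exists>M::nat. \<exists>b::nat \<Rightarrow> complex. \<forall>z. Fh z =
      (\<Sum>k\<le>2*M. b k * exp (2 * of_real pi * \<i> * z) powi (int k - int M))"
proof -
  define c2 :: complex where "c2 = 2 * of_real pi * \<i>"
  have c2nz: "c2 \<noteq> 0" by (simp add: c2_def)
  define G where "G \<zeta> = Fh (Ln \<zeta> / c2)" for \<zeta>
  have Fd: "\<exists>f'. DERIV Fh z :> f'" for z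
    using hol holomorphic_on_open[of UNIV Fh] by auto
  have shift: "Fh (w / c2) = Fh (v / c2)" if "exp w = exp v" for w v
  proof -
    from that obtain n where n: "w = v + of_real (of_int (2 * n) * pi) * \<i>" unfolding exp_eq by (elim exE)
    have "w / c2 = v / c2 + of_int n" using c2nz unfolding n by (simp add: c2_def field_simps)
    then show ?thesis using per by simp
  qed
  have Gexp: "G (exp (c2 * z)) = Fh z" for z
  proof -
    have "exp (Ln (exp (c2 * z))) = exp (c2 * z)" by (simp add: exp_Ln)
    then have "G (exp (c2 * z)) = Fh ((c2 * z) / c2)" unfolding G_def by (rule shift)
    then show ?thesis using c2nz by simp
  qed
  have Galt: "G \<zeta> = Fh ((Ln (- \<zeta>) + \<i> * of_real pi) / c2)" if "\<zeta> \<noteq> 0" for \<zeta>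
  proof -
    have "exp (Ln (- \<zeta>) + \<i> * of_real pi) = exp (Ln \<zeta>)"
      using that by (simp add: exp_add exp_Ln exp_pi_i')
    then show ?thesis unfolding G_def by (rule shift[symmetric])
  qed
  have Gd: "\<exists>f'. DERIV G \<zeta> :> f'" if "\<zeta> \<noteq> 0" for \<zeta>
  proof (cases "\<zeta> \<in> \<real>\<^sub>\<le>\<^sub>0")
    case False
    obtain f' where f': "DERIV Fh (Ln \<zeta> / c2) :> f'" using Fd by blast
    have "DERIV (\<lambda>\<zeta>. Ln \<zeta> / c2) \<zeta> :> inverse \<zeta> / c2"
      using False c2nz by (auto intro!: derivative_eq_intros)
    from DERIV_chain2[OF f' this] show ?thesis unfolding G_def by blast
  next
    case True
    then have nn: "- \<zeta> \<notin> \<real>\<^sub>\<le>\<^sub>0" using that by (auto simp: complex_nonpos_Reals_iff complex_eq_iff)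
    obtain f' where f': "DERIV Fh ((Ln (- \<zeta>) + \<i> * of_real pi) / c2) :> f'" using Fd by blast
    have "DERIV (\<lambda>\<zeta>. (Ln (- \<zeta>) + \<i> * of_real pi) / c2) \<zeta> :> (- inverse (- \<zeta>)) / c2"
      using nn c2nz by (auto intro!: derivative_eq_intros)
    from DERIV_chain2[OF f' this]
    have "DERIV (\<lambda>\<zeta>. Fh ((Ln (- \<zeta>) + \<i> * of_real pi) / c2)) \<zeta> :> f' * (- inverse (- \<zeta>) / c2)" .
    then have "DERIV G \<zeta> :> f' * (- inverse (- \<zeta>) / c2)"
      by (rule has_field_derivative_transform_within_open[where S = "- {0}"]) (use that Galt in auto)
    then show ?thesis by blast
  qed
  define a where "a = K1 / (2 * pi)"
  have a0: "a \<ge> 0" using K1 by (simp add: a_def)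
  define M where "M = nat \<lceil>a\<rceil>"
  have aM: "a \<le> real M" unfolding M_def by linarith
  have Gbd: "norm (G \<zeta>) \<le> C1 * exp (a * \<bar>ln (norm \<zeta>)\<bar>)" if "\<zeta> \<noteq> 0" for \<zeta>
  proof -
    have "Im (Ln \<zeta> / c2) = - Re (Ln \<zeta>) / (2 * pi)"
      by (simp add: c2_def Im_divide power2_eq_square)
    then have "\<bar>Im (Ln \<zeta> / c2)\<bar> = \<bar>ln (norm \<zeta>)\<bar> / (2 * pi)" using that by (simp add: Re_Ln)
    then have "K1 * \<bar>Im (Ln \<zeta> / c2)\<bar> = a * \<bar>ln (norm \<zeta>)\<bar>" by (simp add: a_def)
    then show ?thesis using bd[of "Ln \<zeta> / c2"] unfolding G_def by simp
  qed
  define H where "H \<zeta> = \<zeta> ^ M * G \<zeta>" for \<zeta>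
  have Hhol: "H holomorphic_on (UNIV - {0})"
  proof -
    have "G holomorphic_on (- {0})" using Gd by (subst holomorphic_on_open) auto
    then show ?thesis unfolding H_def by (intro holomorphic_intros) (auto simp: Compl_eq_Diff_UNIV)
  qed
  have Hbd: "norm (H \<zeta>) \<le> C1 * exp ((real M * ln (norm \<zeta>)) + a * \<bar>ln (norm \<zeta>)\<bar>)" if "\<zeta> \<noteq> 0" for \<zeta>
  proof -
    have xM: "norm \<zeta> ^ M = exp (real M * ln (norm \<zeta>))"
      using that by (simp add: exp_of_nat_mult)
    have "norm (H \<zeta>) = norm \<zeta> ^ M * norm (G \<zeta>)" by (simp add: H_def norm_mult norm_power)
    also have "\<dots> \<le> exp (real M * ln (norm \<zeta>)) * (C1 * exp (a * \<bar>ln (norm \<zeta>)\<bar>))"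
      unfolding xM by (intro mult_left_mono Gbd that) auto
    also have "\<dots> = C1 * exp ((real M * ln (norm \<zeta>)) + a * \<bar>ln (norm \<zeta>)\<bar>)" by (simp add: exp_add)
    finally show ?thesis .
  qed
  have Hsmall: "norm (H \<zeta>) \<le> C1" if "\<zeta> \<noteq> 0" "norm \<zeta> < 1" for \<zeta>
  proof -
    have l: "ln (norm \<zeta>) \<le> 0" using that by simp
    then have "real M * ln (norm \<zeta>) + a * \<bar>ln (norm \<zeta>)\<bar> = (real M - a) * ln (norm \<zeta>)"
      by (simp add: algebra_simps)
    also have "\<dots> \<le> 0" using aM l by (simp add: mult_nonneg_nonpos)
    finally have "exp (real M * ln (norm \<zeta>) + a * \<bar>ln (norm \<zeta>)\<bar>) \<le> 1" by simp
    then show ?thesis using Hbd[OF that(1)] C1 by (meson mult_left_le order_trans)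
  qed
  have Hbig: "norm (H \<zeta>) \<le> C1 * norm \<zeta> ^ (2 * M)" if "1 \<le> norm \<zeta>" for \<zeta>
  proof -
    have nz: "\<zeta> \<noteq> 0" using that by auto
    have l: "ln (norm \<zeta>) \<ge> 0" using that by simp
    then have "real M * ln (norm \<zeta>) + a * \<bar>ln (norm \<zeta>)\<bar> \<le> real (2 * M) * ln (norm \<zeta>)"
      using aM by (simp add: algebra_simps mult_right_mono)
    then have "exp (real M * ln (norm \<zeta>) + a * \<bar>ln (norm \<zeta>)\<bar>) \<le> exp (real (2 * M) * ln (norm \<zeta>))"
      by simp
    also have "exp (real (2 * M) * ln (norm \<zeta>)) = exp (ln (norm \<zeta>)) ^ (2 * M)"
      by (rule exp_of_nat_mult)
    also have "\<dots> = norm \<zeta> ^ (2 * M)" using nz by simp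
    finally have "exp (real M * ln (norm \<zeta>) + a * \<bar>ln (norm \<zeta>)\<bar>) \<le> norm \<zeta> ^ (2 * M)" .
    then show ?thesis using Hbd[OF nz] C1 by (meson mult_left_mono order_trans)
  qed
  have "\<exists>H'. H' holomorphic_on UNIV \<and> (\<forall>z \<in> UNIV - {0}. H' z = H z)"
  proof (subst holomorphic_on_extend_bounded[OF Hhol])
    show "0 \<in> interior (UNIV :: complex set)" by simp
    have "eventually (\<lambda>z. norm (H z) \<le> C1) (at 0)"
      unfolding eventually_at
    proof (intro exI[of _ 1] conjI ballI impI)
      fix x :: complex assume "x \<noteq> 0 \<and> dist x 0 < 1"
      then show "norm (H x) \<le> C1" by (intro Hsmall) auto
    qed simp
    then show "\<exists>B. eventually (\<lambda>z. norm (H z) \<le> B) (at 0)" by blast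
  qed
  then obtain H' where H'hol: "H' holomorphic_on UNIV" and H'H: "\<And>z. z \<noteq> 0 \<Longrightarrow> H' z = H z" by blast
  define b where "b k = (deriv ^^ k) H' 0 / fact k" for k
  have Hb': "norm (H' z) \<le> C1 * norm z ^ (2*M)" if "1 \<le> norm z" for z
  proof -
    have "z \<noteq> 0" using that by auto
    then show ?thesis using Hbig[OF that] H'H by simp
  qed
  have poly: "H' \<xi> = (\<Sum>k\<le>2*M. b k * \<xi> ^ k)" for \<xi>
    unfolding b_def using Liouville_polynomial[OF H'hol Hb'] .
  have "Fh z = (\<Sum>k\<le>2*M. b k * exp (c2 * z) powi (int k - int M))" for z
  proof -
    define \<zeta> where "\<zeta> = exp (c2 * z)"
    have nz: "\<zeta> \<noteq> 0" by (simp add: \<zeta>_def)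
    have "Fh z = G \<zeta>" using Gexp by (simp add: \<zeta>_def)
    also have "\<dots> = H \<zeta> / \<zeta> ^ M" using nz by (simp add: H_def)
    also have "\<dots> = H' \<zeta> / \<zeta> ^ M" using H'H[OF nz] by simp
    also have "\<dots> = (\<Sum>k\<le>2*M. b k * \<zeta> ^ k) / \<zeta> ^ M" using poly by simp
    also have "\<dots> = (\<Sum>k\<le>2*M. b k * \<zeta> ^ k / \<zeta> ^ M)"
      by (rule sum_divide_distrib)
    also have "\<dots> = (\<Sum>k\<le>2*M. b k * \<zeta> powi (int k - int M))"
    proof (rule sum.cong)
      fix k assume "k \<in> {..2*M}"
      have "\<zeta> powi (int k - int M) = \<zeta> powi (int k) / \<zeta> powi (int M)"
        using nz by (rule power_int_diff[OF disjI1])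
      then show "b k * \<zeta> ^ k / \<zeta> ^ M = b k * \<zeta> powi (int k - int M)"
        by (simp add: power_int_of_nat)
    qed simp
    finally show ?thesis by (simp add: \<zeta>_def)
  qed
  then show ?thesis unfolding c2_def by blast
qed

lemma polar_re_pos:
  assumes "Re w > 0"
  shows "w = of_real (norm w) * cis (arctan (Im w / Re w))"
proof -
  define a where "a = Re w"
  define x where "x = Im w / Re w"
  have a: "a > 0" using assms by (simp add: a_def)
  have b: "Im w = a * x" using a by (simp add: a_def x_def)
  have s1: "sqrt (1 + x\<^sup>2) > 0" by (simp add: add_pos_nonneg)
  have "norm w = sqrt (a\<^sup>2 * (1 + x\<^sup>2))"
    unfolding cmod_def using b by (simp add: a_def[symmetric] power_mult_distrib algebra_simps)
  also have "\<dots> = a * sqrt (1 + x\<^sup>2)" using a by (simp add: real_sqrt_mult)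
  finally have nw: "norm w = a * sqrt (1 + x\<^sup>2)" .
  have "Re (of_real (norm w) * cis (arctan x)) = a"
    using s1 by (simp add: nw cos_arctan)
  moreover have "Im (of_real (norm w) * cis (arctan x)) = Im w"
    using s1 by (simp add: nw sin_arctan b)
  ultimately show ?thesis by (simp add: complex_eq_iff a_def x_def)
qed

lemma const_A_per_le0: "A_per_le0_germ \<theta> (\<lambda>_. b)"
  unfolding A_per_le0_germ_def periodic_germ_def
proof (intro conjI)
  show "holo_germ \<theta> (\<lambda>_. b)" by (rule holo_germI[of 1 1]) auto
  show "germ_eq \<theta> (phi_tilde (\<lambda>_. b)) (\<lambda>_. b)" by (rule germ_eqI[of 1 1]) (auto simp: phi_tilde_def)
  show "moderate_germ \<theta> (\<lambda>_. b)" unfolding moderate_germ_def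
    by (rule exI[of _ 1], simp, rule exI[of _ 1], simp, rule exI[of _ "norm b"], rule exI[of _ 0]) auto
qed

lemma cos_ge_half: "\<bar>x\<bar> < 1 \<Longrightarrow> cos x \<ge> 1 / 2" for x :: real
proof -
  assume "\<bar>x\<bar> < 1"
  moreover have "1 < pi / 3" using pi_gt3 by simp
  ultimately have "cos (pi / 3) \<le> cos \<bar>x\<bar>" by (intro cos_monotone_0_pi_le) auto
  then show ?thesis by (simp add: cos_60)
qed

lemma div_polar: "cis \<theta> / (of_real \<rho> * cis \<psi>) = of_real (1 / \<rho>) * cis (\<theta> - \<psi>)"
proof -
  have "cis \<theta> / (of_real \<rho> * cis \<psi>) = cis \<theta> * (of_real (1 / \<rho>) * cis (- \<psi>))"
    unfolding divide_inverse inv_polar ..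
  also have "\<dots> = of_real (1 / \<rho>) * (cis \<theta> * cis (- \<psi>))" by (simp only: mult.left_commute)
  also have "cis \<theta> * cis (- \<psi>) = cis (\<theta> - \<psi>)" by (simp only: cis_mult diff_conv_add_uminus)
  finally show ?thesis .
qed
lemma a1: "Re w > 0 \<Longrightarrow> \<bar>Im w\<bar> < c * Re w \<Longrightarrow> \<bar>Im w / Re w\<bar> < c"
proof -
  assume a: "Re w > 0" "\<bar>Im w\<bar> < c * Re w"
  have "\<bar>Im w / Re w\<bar> = \<bar>Im w\<bar> / Re w" using a(1) by simp
  also have "\<dots> < c" using a by (simp add: pos_divide_less_eq)
  finally show ?thesis .
qed

lemma a2: "(r::real) > 0 \<Longrightarrow> x > 1 / r \<Longrightarrow> 1 / x < r"
proof -
  assume a: "r > 0" "x > 1 / r"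
  then have "x > 0" by (meson less_trans zero_less_divide_1_iff)
  then show ?thesis using a by (simp add: field_simps)
qed

lemma p1: "w \<noteq> 0 \<Longrightarrow> w + 1 \<noteq> 0 \<Longrightarrow> (1 / w) / (1 + 1 / w) = 1 / (w + 1)" for w :: complex
  by (simp add: divide_simps add.commute)
lemma p2: "w \<noteq> 0 \<Longrightarrow> w + 1 \<noteq> 0 \<Longrightarrow> (- 1 / (w + 1)) / (1 + - 1 / (w + 1)) = - 1 / w" for w :: complex
  by (simp add: divide_simps)
lemma p3: "of_int s = (of_real \<sigma> :: complex) \<Longrightarrow> exp (2 * of_real pi * \<i> * (of_real \<sigma> / t)) = u_fun t powi s"
  unfolding u_powi by (simp add: mult_ac)

lemma key_horiz:
  assumes gd: "good \<theta> g \<delta> r" and sn: "sin \<theta> = 0"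
  shows "A_per_germ \<theta> g"
proof -
  from gd obtain C K where dp: "\<delta> > 0" "r > 0" "r \<le> 1" and hol: "g holomorphic_on sector \<theta> \<delta> r"
    and per: "\<And>t. t \<in> sector \<theta> \<delta> r \<Longrightarrow> g (t / (1 + t)) = g t"
    and CK: "C \<ge> 0" "K \<ge> 0" "\<And>t. t \<in> sector \<theta> \<delta> r \<Longrightarrow> norm (g t) \<le> C * exp (K / norm t)"
    unfolding good_def by blast
  define \<sigma> where "\<sigma> = cos \<theta>"
  have s2: "\<sigma>\<^sup>2 = 1" using sin_cos_squared_add[of \<theta>] sn by (simp add: \<sigma>_def)
  then have s12: "\<sigma> = 1 \<or> \<sigma> = -1" by (simp add: power2_eq_1_iff)
  have cisth: "cis \<theta> = of_real \<sigma>" using sn by (simp add: \<sigma>_def complex_eq_iff)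
  define c where "c = min \<delta> 1 / 2"
  have c: "c > 0" "c < \<delta>" "c \<le> 1 / 2" using dp by (auto simp: c_def)
  define R where "R = 1 / r + 1"
  have "1 / r > 0" using dp by simp
  then have R: "R > 0" "R > 1 / r" unfolding R_def by linarith+
  define W where "W = {w. R < Re w \<and> \<bar>Im w\<bar> < c * Re w}"
  define F where "F w = g (of_real \<sigma> / w)" for w
  have Wnz: "w \<noteq> 0" if "w \<in> W" for w using that R unfolding W_def by auto
  have mapW: "of_real \<sigma> / w \<in> sector \<theta> \<delta> r" if w: "w \<in> W" for w
  proof -
    have rw: "Re w > R" "\<bar>Im w\<bar> < c * Re w" using w unfolding W_def by auto
    have rw0: "Re w > 0" using rw R by linarith
    define \<phi> where "\<phi> = arctan (Im w / Re w)"
    have "\<bar>Im w / Re w\<bar> < c" using rw0 rw(2) by (rule a1)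
    then have ph: "\<bar>\<phi>\<bar> < \<delta>" using abs_arctan_le[of "Im w / Re w"] c unfolding \<phi>_def by linarith
    have wp: "w = of_real (norm w) * cis \<phi>" unfolding \<phi>_def by (rule polar_re_pos[OF rw0])
    have nw: "norm w > 1 / r" using complex_Re_le_cmod[of w] rw R by linarith
    have nwp: "norm w > 0" using Wnz[OF w] by simp
    have eq: "of_real \<sigma> / w = of_real (1 / norm w) * cis (\<theta> - \<phi>)"
    proof -
      have "of_real \<sigma> / w = cis \<theta> / (of_real (norm w) * cis \<phi>)"
        by (simp only: wp[symmetric] cisth)
      also have "\<dots> = of_real (1 / norm w) * cis (\<theta> - \<phi>)" by (rule div_polar)
      finally show ?thesis .
    qed
    have nt: "norm (of_real \<sigma> / w :: complex) = 1 / norm w" unfolding eq using nwp by (simp only: norm_mult norm_cis norm_of_real mult_1_right) simp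
    have lr: "1 / norm w < r" using dp(2) nw by (rule a2)
    have ph2: "\<bar>(\<theta> - \<phi>) - \<theta>\<bar> < \<delta>" using ph by simp
    have nz: "of_real \<sigma> / w \<noteq> 0" using nt nwp by (metis norm_zero zero_less_divide_1_iff less_irrefl)
    show ?thesis unfolding sector_def
    proof (intro CollectI conjI exI[of _ "\<theta> - \<phi>"])
      show "of_real \<sigma> / w \<noteq> 0" by (rule nz)
      show "norm (of_real \<sigma> / w :: complex) < r" using nt lr by simp
      show "\<bar>(\<theta> - \<phi>) - \<theta>\<bar> < \<delta>" by (rule ph2)
      show "of_real \<sigma> / w = complex_of_real (norm (of_real \<sigma> / w :: complex)) * cis (\<theta> - \<phi>)"
        unfolding nt by (rule eq)
    qed
  qed
  have Fhol: "F holomorphic_on W"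
  proof -
    have "(\<lambda>w. of_real \<sigma> / w) holomorphic_on W" using Wnz by (intro holomorphic_intros) auto
    from holomorphic_on_compose_gen[OF this hol] mapW show ?thesis unfolding F_def o_def by blast
  qed
  have W1: "w + 1 \<in> W" if "w \<in> W" for w
  proof -
    have "c * Re w < c * (Re w + 1)" using c by simp
    then show ?thesis using that unfolding W_def by auto
  qed
  have Fper: "F (w + 1) = F w" if w: "w \<in> W" for w
  proof -
    have w0: "w \<noteq> 0" "w + 1 \<noteq> 0" using Wnz w W1 by auto
    from s12 show ?thesis
    proof
      assume s: "\<sigma> = 1"
      define t where "t = 1 / w"
      have tS: "t \<in> sector \<theta> \<delta> r" using mapW[OF w] s by (simp add: t_def)
      have "t / (1 + t) = 1 / (w + 1)" unfolding t_def using w0 by (rule p1)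
      then show ?thesis using per[OF tS] s by (simp add: F_def t_def)
    next
      assume s: "\<sigma> = -1"
      define t where "t = - 1 / (w + 1)"
      have tS: "t \<in> sector \<theta> \<delta> r" using mapW[OF W1[OF w]] s by (simp add: t_def)
      have "t / (1 + t) = - 1 / w" unfolding t_def using w0 by (rule p2)
      then show ?thesis using per[OF tS] s by (simp add: F_def t_def)
    qed
  qed
  have Fbd: "norm (F w) \<le> C * exp (K * norm w)" if w: "w \<in> W" for w
  proof -
    have "norm (of_real \<sigma> / w :: complex) = 1 / norm w" using s12 by (auto simp: norm_divide)
    then show ?thesis using CK(3)[OF mapW[OF w]] Wnz[OF w] by (simp add: F_def)
  qed
  obtain Fh where Fh: "Fh holomorphic_on UNIV" "\<forall>z. \<forall>k::int. Fh (z + of_int k) = Fh z"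
     "\<forall>w\<in>W. Fh w = F w" and Fhb: "\<exists>C1 K1. C1 \<ge> 0 \<and> K1 \<ge> 0 \<and> (\<forall>z. norm (Fh z) \<le> C1 * exp (K1 * \<bar>Im z\<bar>))"
    using periodic_extension[OF W_def c(1) less_imp_le[OF R(1)] CK(1) CK(2) Fhol Fper Fbd] by blast
  from Fhb obtain C1 K1 where C1K1: "C1 \<ge> 0" "K1 \<ge> 0" "\<And>z. norm (Fh z) \<le> C1 * exp (K1 * \<bar>Im z\<bar>)" by blast
  obtain M :: nat and b :: "nat \<Rightarrow> complex" where Mb: "\<And>z. Fh z =
      (\<Sum>k\<le>2*M. b k * exp (2 * of_real pi * \<i> * z) powi (int k - int M))"
    using periodic_laurent[OF Fh(1) _ C1K1] Fh(2) by blast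
  define \<sigma>i :: int where "\<sigma>i = (if \<sigma> = 1 then 1 else -1)"
  have sig: "of_int \<sigma>i = (of_real \<sigma> :: complex)" using s12 by (auto simp: \<sigma>i_def)
  define \<delta>2 where "\<delta>2 = c / 2"
  define r2 where "r2 = 1 / (2 * R + 1)"
  have d2: "\<delta>2 > 0" "r2 > 0" using c R by (auto simp: \<delta>2_def r2_def)
  have main: "g t = (\<Sum>k<Suc (2*M). u_fun t powi (\<sigma>i * (int k - int M)) * b k)" if t: "t \<in> sector \<theta> \<delta>2 r2" for t
  proof -
    obtain \<psi> where \<psi>: "\<bar>\<psi> - \<theta>\<bar> < \<delta>2" "t = of_real (norm t) * cis \<psi>" using sector_polar[OF t] by blast
    define \<rho> where "\<rho> = norm t"
    have \<rho>: "\<rho> > 0" "\<rho> < r2" using t sector_nz sector_norm unfolding \<rho>_def by auto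
    define w where "w = of_real \<sigma> / t"
    have weq: "w = of_real (1 / \<rho>) * cis (\<theta> - \<psi>)"
    proof -
      have "w = cis \<theta> / (of_real \<rho> * cis \<psi>)" unfolding w_def \<rho>_def by (simp only: \<psi>(2)[symmetric] cisth)
      then show ?thesis by (simp only: div_polar)
    qed
    have "Re w = cos (\<theta> - \<psi>) / \<rho>" "Im w = sin (\<theta> - \<psi>) / \<rho>" unfolding weq by (simp_all add: cis.sel)
    have xs: "\<bar>\<theta> - \<psi>\<bar> < \<delta>2" using \<psi>(1) by linarith
    have cs: "cos (\<theta> - \<psi>) \<ge> 1 / 2" using xs c by (intro cos_ge_half) (simp add: \<delta>2_def)
    have ss: "\<bar>sin (\<theta> - \<psi>)\<bar> < c * cos (\<theta> - \<psi>)"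
    proof -
      have "\<bar>sin (\<theta> - \<psi>)\<bar> \<le> \<bar>\<theta> - \<psi>\<bar>" by (rule abs_sin_x_le_abs_x)
      also have "\<dots> < c / 2" using xs by (simp add: \<delta>2_def)
      also have "\<dots> \<le> c * cos (\<theta> - \<psi>)" using cs c by (simp add: mult_left_mono[of "1/2" _ c, simplified])
      finally show ?thesis .
    qed
    have re: "Re w = cos (\<theta> - \<psi>) / \<rho>" and im: "Im w = sin (\<theta> - \<psi>) / \<rho>" by fact+
    have wW: "w \<in> W" unfolding W_def
    proof (intro CollectI conjI)
      have i: "1 / \<rho> > 2 * R + 1" using \<rho> R by (simp add: r2_def divide_simps mult.commute)
      have "cos (\<theta> - \<psi>) / \<rho> \<ge> (1/2) / \<rho>" by (rule divide_right_mono[OF cs]) (use \<rho> in simp)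
      moreover have "(1/2) / \<rho> = (1 / \<rho>) / 2" by simp
      ultimately show "R < Re w" unfolding re using i by linarith
      have "\<bar>Im w\<bar> = \<bar>sin (\<theta> - \<psi>)\<bar> / \<rho>" unfolding im using \<rho>(1) by simp
      also have "\<dots> < (c * cos (\<theta> - \<psi>)) / \<rho>" by (rule divide_strict_right_mono[OF ss \<rho>(1)])
      also have "\<dots> = c * Re w" unfolding re by simp
      finally show "\<bar>Im w\<bar> < c * Re w" .
    qed
    have snz: "(of_real \<sigma> :: complex) \<noteq> 0" using s12 by auto
    have tw: "of_real \<sigma> / w = t" unfolding w_def divide_divide_eq_right
      using snz by (rule nonzero_mult_div_cancel_left)
    have "g t = F w" unfolding F_def tw ..
    also have "\<dots> = Fh w" using Fh(3) wW by simp
    also have "\<dots> = (\<Sum>k\<le>2*M. b k * exp (2 * of_real pi * \<i> * w) powi (int k - int M))" by (rule Mb)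
    also have "\<dots> = (\<Sum>k<Suc (2*M). u_fun t powi (\<sigma>i * (int k - int M)) * b k)"
      unfolding lessThan_Suc_atMost
    proof (rule sum.cong)
      fix k assume "k \<in> {..2*M}"
      have "exp (2 * of_real pi * \<i> * w) = u_fun t powi \<sigma>i"
        unfolding w_def by (rule p3[OF sig])
      then show "b k * exp (2 * of_real pi * \<i> * w) powi (int k - int M) = u_fun t powi (\<sigma>i * (int k - int M)) * b k"
        by (simp only: power_int_mult mult.commute)
    qed simp
    finally show ?thesis .
  qed
  show ?thesis unfolding A_per_germ_def
  proof (intro exI conjI)
    show "\<forall>i<Suc (2*M). A_per_le0_germ \<theta> ((\<lambda>k _. b k) i)" using const_A_per_le0 by blast
    show "germ_eq \<theta> g (\<lambda>t. \<Sum>i<Suc (2*M). u_fun t powi (\<lambda>k. \<sigma>i * (int k - int M)) i * (\<lambda>k _. b k) i t)"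
      by (rule germ_eqI[OF d2]) (simp add: main)
  qed
qed

lemma Per_imp_A_per: "Per_germ \<theta> f \<Longrightarrow> A_per_germ \<theta> f"
proof -
  assume "Per_germ \<theta> f"
  then obtain k :: nat and a g where ag: "\<forall>i<k. index_germ \<theta> (a i) \<and> H0DR_le_germ \<theta> (a i) (g i)"
    and fe: "germ_eq \<theta> f (\<lambda>t. \<Sum>i<k. g i t)"
    unfolding Per_germ_def by blast
  have "\<forall>i<k. \<exists>\<delta> r. good \<theta> (g i) \<delta> r" using ag Per_single by blast
  then obtain \<delta> r where gd: "good \<theta> (\<lambda>t. \<Sum>i<k. g i t) \<delta> r" using good_sum by blast
  have "A_per_germ \<theta> (\<lambda>t. \<Sum>i<k. g i t)"
  proof (cases "sin \<theta> = 0")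
    case True then show ?thesis using key_horiz[OF gd] by blast
  next
    case False then show ?thesis using key_vert[OF gd] by blast
  qed
  then show ?thesis using fe A_per_germ_cong by blast
qed

theorem theorem4p13:
  fixes \<theta> :: real and f :: "complex \<Rightarrow> complex"
  shows "Per_germ \<theta> f \<longleftrightarrow> A_per_germ \<theta> f"
  using Per_imp_A_per A_per_imp_Per by blast


end
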